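(* Let $G=H\times K$ where $H$ and $K$ are finitely generated groups. Then $\alpha_G\preccurlyeq\alpha_H\cdot\alpha_K$. If, in addition, $H$ and $K$ are characteristic in $G$, then $\alpha_G\sim\alpha_H\cdot\alpha_K$.
   Context: For a finitely generated group $G$ with finite generating set $\Sigma$, the automorphic growth function sends $n$ to the number of $\operatorname{Aut}(G)$-orbits of $G$ containing an element of word length at most $n$; $\alpha_G$ denotes its $\sim$-class (independent of $\Sigma$). For non-decreasing non-zero $f,g\colon\mathbb{N}\to\mathbb{N}$, $f\preccurlyeq g$ means there is $\lambda\in\mathbb{N}\setminus\{0\}$ with $f(n)\le\lambda g(\lambda n+\lambda)+\lambda$ for all $n$, and $f\sim g$ means both directions hold; products of classes are taken pointwise on representatives (well defined). *)

theory Defs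
  imports "HOL-Algebra.Algebra"
begin

definition fin_gen_set :: "('a, 'm) monoid_scheme \<Rightarrow> 'a set \<Rightarrow> bool" where
  "fin_gen_set G S \<longleftrightarrow> finite S \<and> S \<subseteq> carrier G \<and> generate G S = carrier G"

definition words_eval :: "('a, 'm) monoid_scheme \<Rightarrow> 'a set \<Rightarrow> nat \<Rightarrow> 'a set" where
  "words_eval G S n = {foldr (\<otimes>\<^bsub>G\<^esub>) xs \<one>\<^bsub>G\<^esub> | xs.
      length xs = n \<and> set xs \<subseteq> S \<union> m_inv G ` S}"

definition word_length :: "('a, 'm) monoid_scheme \<Rightarrow> 'a set \<Rightarrow> 'a \<Rightarrow> nat" where
  "word_length G S g = (LEAST n. g \<in> words_eval G S n)"

definition aut_orbit :: "('a, 'm) monoid_scheme \<Rightarrow> 'a \<Rightarrow> 'a set" where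
  "aut_orbit G g = {\<phi> g | \<phi>. \<phi> \<in> iso G G}"

definition aut_growth :: "('a, 'm) monoid_scheme \<Rightarrow> 'a set \<Rightarrow> nat \<Rightarrow> nat" where
  "aut_growth G S n = card {aut_orbit G g | g. g \<in> carrier G \<and> word_length G S g \<le> n}"

definition growth_le :: "(nat \<Rightarrow> nat) \<Rightarrow> (nat \<Rightarrow> nat) \<Rightarrow> bool" (infix "\<preccurlyeq>\<^sub>g" 50) where
  "f \<preccurlyeq>\<^sub>g g \<longleftrightarrow> (\<exists>c::nat. c \<noteq> 0 \<and> (\<forall>n. f n \<le> c * g (c * n + c) + c))"

definition growth_equiv :: "(nat \<Rightarrow> nat) \<Rightarrow> (nat \<Rightarrow> nat) \<Rightarrow> bool" (infix "\<sim>\<^sub>g" 50) where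
  "f \<sim>\<^sub>g g \<longleftrightarrow> f \<preccurlyeq>\<^sub>g g \<and> g \<preccurlyeq>\<^sub>g f"

definition characteristic :: "'a set \<Rightarrow> ('a, 'm) monoid_scheme \<Rightarrow> bool" where
  "characteristic S G \<longleftrightarrow> subgroup S G \<and> (\<forall>\<phi>\<in>iso G G. \<phi> ` S \<subseteq> S)"

end

theory Submission
  imports Defs
begin

lemma foldr_closed:
  assumes "monoid G" "set xs \<subseteq> carrier G"
  shows "foldr (\<otimes>\<^bsub>G\<^esub>) xs \<one>\<^bsub>G\<^esub> \<in> carrier G"
  using assms(2) by (induction xs) (auto simp: monoid.m_closed[OF assms(1)] monoid.one_closed[OF assms(1)])

lemma foldr_app_mult:
  assumes "monoid G" "set xs \<subseteq> carrier G" "set ys \<subseteq> carrier G"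
  shows "foldr (\<otimes>\<^bsub>G\<^esub>) (xs @ ys) \<one>\<^bsub>G\<^esub> = foldr (\<otimes>\<^bsub>G\<^esub>) xs \<one>\<^bsub>G\<^esub> \<otimes>\<^bsub>G\<^esub> foldr (\<otimes>\<^bsub>G\<^esub>) ys \<one>\<^bsub>G\<^esub>"
  using assms(2)
proof (induction xs)
  case Nil
  then show ?case using foldr_closed[OF assms(1,3)] assms(1) by (simp add: monoid.l_one)
next
  case (Cons a xs)
  then show ?case using foldr_closed[OF assms(1,3)] foldr_closed[OF assms(1), of xs] assms(1)
    by (simp add: monoid.m_assoc)
qed

lemma letters_carrier:
  assumes "group G" "S \<subseteq> carrier G"
  shows "S \<union> m_inv G ` S \<subseteq> carrier G"
  using assms(2) group.inv_closed[OF assms(1)] by auto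

lemma words_carrier:
  assumes "group G" "S \<subseteq> carrier G"
  shows "words_eval G S n \<subseteq> carrier G"
proof
  fix x assume "x \<in> words_eval G S n"
  then obtain xs where "x = foldr (\<otimes>\<^bsub>G\<^esub>) xs \<one>\<^bsub>G\<^esub>" "set xs \<subseteq> S \<union> m_inv G ` S"
    unfolding words_eval_def by blast
  then show "x \<in> carrier G"
    using foldr_closed[OF group.is_monoid[OF assms(1)], of xs] letters_carrier[OF assms] by auto
qed

lemma words_mult:
  assumes "group G" "S \<subseteq> carrier G" "x \<in> words_eval G S m" "y \<in> words_eval G S n"
  shows "x \<otimes>\<^bsub>G\<^esub> y \<in> words_eval G S (m + n)"
proof -
  obtain xs where xs: "x = foldr (\<otimes>\<^bsub>G\<^esub>) xs \<one>\<^bsub>G\<^esub>" "length xs = m" "set xs \<subseteq> S \<union> m_inv G ` S"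
    using assms(3) unfolding words_eval_def by blast
  obtain ys where ys: "y = foldr (\<otimes>\<^bsub>G\<^esub>) ys \<one>\<^bsub>G\<^esub>" "length ys = n" "set ys \<subseteq> S \<union> m_inv G ` S"
    using assms(4) unfolding words_eval_def by blast
  have "set xs \<subseteq> carrier G" "set ys \<subseteq> carrier G"
    using letters_carrier[OF assms(1,2)] xs ys by blast+
  then have "x \<otimes>\<^bsub>G\<^esub> y = foldr (\<otimes>\<^bsub>G\<^esub>) (xs @ ys) \<one>\<^bsub>G\<^esub>"
    using foldr_app_mult[OF group.is_monoid[OF assms(1)], of xs ys] xs ys
    by (simp del: List.foldr_append)
  then show ?thesis unfolding words_eval_def using xs ys
    by (intro CollectI exI[of _ "xs @ ys"]) (auto simp del: List.foldr_append)
qed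

lemma words_zero: "\<one>\<^bsub>G\<^esub> \<in> words_eval G S 0"
  unfolding words_eval_def by auto

lemma words_exist:
  assumes "group G" "S \<subseteq> carrier G" "g \<in> generate G S"
  shows "\<exists>n. g \<in> words_eval G S n"
  using assms(3)
proof (induction rule: generate.induct)
  case one
  then show ?case using words_zero by blast
next
  case (incl h)
  then have "h = foldr (\<otimes>\<^bsub>G\<^esub>) [h] \<one>\<^bsub>G\<^esub>"
    using assms by (simp add: group.is_monoid monoid.r_one subsetD)
  then have "h \<in> words_eval G S 1" unfolding words_eval_def using incl
    by (intro CollectI exI[of _ "[h]"]) auto
  then show ?case by blast
next
  case (inv h)
  then have "inv\<^bsub>G\<^esub> h = foldr (\<otimes>\<^bsub>G\<^esub>) [inv\<^bsub>G\<^esub> h] \<one>\<^bsub>G\<^esub>"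
    using assms by (simp add: group.is_monoid monoid.r_one subsetD group.inv_closed)
  then have "inv\<^bsub>G\<^esub> h \<in> words_eval G S 1" unfolding words_eval_def using inv
    by (intro CollectI exI[of _ "[inv\<^bsub>G\<^esub> h]"]) auto
  then show ?case by blast
next
  case (eng h1 h2)
  then show ?case using words_mult[OF assms(1,2)] by blast
qed

lemma in_words_wl:
  assumes "group G" "fin_gen_set G S" "g \<in> carrier G"
  shows "g \<in> words_eval G S (word_length G S g)"
  using words_exist[OF assms(1), of S g] assms unfolding fin_gen_set_def word_length_def
  by (auto intro: LeastI_ex)

lemma wl_le: "g \<in> words_eval G S n \<Longrightarrow> word_length G S g \<le> n"
  unfolding word_length_def by (rule Least_le)

lemma wl_one: "word_length G S \<one>\<^bsub>G\<^esub> = 0"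
  using wl_le[OF words_zero] by simp

lemma wl_mult:
  assumes "group G" "fin_gen_set G S" "x \<in> carrier G" "y \<in> carrier G"
  shows "word_length G S (x \<otimes>\<^bsub>G\<^esub> y) \<le> word_length G S x + word_length G S y"
proof -
  have S: "S \<subseteq> carrier G" using assms(2) unfolding fin_gen_set_def by blast
  have "x \<otimes>\<^bsub>G\<^esub> y \<in> words_eval G S (word_length G S x + word_length G S y)"
    by (rule words_mult[OF assms(1) S in_words_wl[OF assms(1,2,3)] in_words_wl[OF assms(1,2,4)]])
  then show ?thesis by (rule wl_le)
qed

lemma wl_hom:
  assumes "f \<in> hom G G'" "group G" "group G'" "fin_gen_set G' S'" "T \<subseteq> carrier G"
    and c: "\<And>x. x \<in> T \<union> m_inv G ` T \<Longrightarrow> word_length G' S' (f x) \<le> c"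
    and g: "g \<in> words_eval G T n"
  shows "word_length G' S' (f g) \<le> c * n"
proof -
  have L: "T \<union> m_inv G ` T \<subseteq> carrier G" using letters_carrier[OF assms(2,5)] .
  have "\<And>xs. set xs \<subseteq> T \<union> m_inv G ` T \<Longrightarrow>
     word_length G' S' (f (foldr (\<otimes>\<^bsub>G\<^esub>) xs \<one>\<^bsub>G\<^esub>)) \<le> c * length xs"
  proof -
    fix xs show "set xs \<subseteq> T \<union> m_inv G ` T \<Longrightarrow>
     word_length G' S' (f (foldr (\<otimes>\<^bsub>G\<^esub>) xs \<one>\<^bsub>G\<^esub>)) \<le> c * length xs"
    proof (induction xs)
      case Nil
      then show ?case using hom_one[OF assms(1-3)] wl_one by simp
    next
      case (Cons a xs)
      have a: "a \<in> carrier G" using Cons.prems L by auto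
      have "set xs \<subseteq> carrier G" using Cons.prems L by auto
      then have r: "foldr (\<otimes>\<^bsub>G\<^esub>) xs \<one>\<^bsub>G\<^esub> \<in> carrier G"
        using foldr_closed[OF group.is_monoid[OF assms(2)]] by auto
      have "f (foldr (\<otimes>\<^bsub>G\<^esub>) (a # xs) \<one>\<^bsub>G\<^esub>) = f a \<otimes>\<^bsub>G'\<^esub> f (foldr (\<otimes>\<^bsub>G\<^esub>) xs \<one>\<^bsub>G\<^esub>)"
        using hom_mult[OF assms(1) a r] by simp
      moreover have "f a \<in> carrier G'" "f (foldr (\<otimes>\<^bsub>G\<^esub>) xs \<one>\<^bsub>G\<^esub>) \<in> carrier G'"
        using a r assms(1) by (auto simp: hom_def)
      ultimately have "word_length G' S' (f (foldr (\<otimes>\<^bsub>G\<^esub>) (a # xs) \<one>\<^bsub>G\<^esub>))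
          \<le> word_length G' S' (f a) + word_length G' S' (f (foldr (\<otimes>\<^bsub>G\<^esub>) xs \<one>\<^bsub>G\<^esub>))"
        using wl_mult[OF assms(3,4)] by simp
      also have "\<dots> \<le> c + c * length xs" using Cons c by (intro add_mono) auto
      finally show ?case by simp
    qed
  qed
  then show ?thesis using g unfolding words_eval_def by auto
qed

lemma words_finite:
  assumes "finite S" shows "finite (words_eval G S n)"
proof -
  have "words_eval G S n = (\<lambda>xs. foldr (\<otimes>\<^bsub>G\<^esub>) xs \<one>\<^bsub>G\<^esub>) ` {xs. set xs \<subseteq> S \<union> m_inv G ` S \<and> length xs = n}"
    unfolding words_eval_def by auto
  then show ?thesis using finite_lists_length_eq[of "S \<union> m_inv G ` S" n] assms by simp
qed

lemma ball_finite:
  assumes "group G" "fin_gen_set G S"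
  shows "finite {g \<in> carrier G. word_length G S g \<le> n}"
proof -
  have "{g \<in> carrier G. word_length G S g \<le> n} \<subseteq> (\<Union>m\<le>n. words_eval G S m)"
    using in_words_wl[OF assms] by blast
  moreover have "finite (\<Union>m\<le>n. words_eval G S m)"
    using words_finite assms(2) unfolding fin_gen_set_def by blast
  ultimately show ?thesis by (rule finite_subset)
qed

lemma aut_growth_img:
  "aut_growth G S n = card (aut_orbit G ` {g \<in> carrier G. word_length G S g \<le> n})"
  unfolding aut_growth_def by (rule arg_cong[where f=card]) blast

lemma aut_growth_mono:
  assumes "group G" "fin_gen_set G S" "n \<le> m"
  shows "aut_growth G S n \<le> aut_growth G S m"
  unfolding aut_growth_img
  by (rule card_mono) (use ball_finite[OF assms(1,2)] assms(3) in auto)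

lemma orbit_self: "g \<in> aut_orbit G g"
  unfolding aut_orbit_def using iso_set_refl by fastforce

lemma orbit_eq:
  assumes "group G" "\<phi> \<in> iso G G" "g \<in> carrier G"
  shows "aut_orbit G (\<phi> g) = aut_orbit G g"
proof
  show "aut_orbit G (\<phi> g) \<subseteq> aut_orbit G g"
  proof
    fix x assume "x \<in> aut_orbit G (\<phi> g)"
    then obtain \<psi> where "\<psi> \<in> iso G G" "x = \<psi> (\<phi> g)" unfolding aut_orbit_def by blast
    then show "x \<in> aut_orbit G g" unfolding aut_orbit_def
      using iso_set_trans[OF assms(2)] by (intro CollectI exI[where x="\<psi> \<circ> \<phi>"]) auto
  qed
next
  let ?i = "inv_into (carrier G) \<phi>"
  have i: "?i \<in> iso G G" using group.iso_set_sym[OF assms(1,2)] .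
  have e: "?i (\<phi> g) = g" using assms(2,3) by (simp add: iso_def bij_betw_def)
  show "aut_orbit G g \<subseteq> aut_orbit G (\<phi> g)"
  proof
    fix x assume "x \<in> aut_orbit G g"
    then obtain \<psi> where "\<psi> \<in> iso G G" "x = \<psi> g" unfolding aut_orbit_def by blast
    then show "x \<in> aut_orbit G (\<phi> g)" unfolding aut_orbit_def
      using iso_set_trans[OF i] e by (intro CollectI exI[where x="\<psi> \<circ> ?i"]) auto
  qed
qed

lemma orbit_eq_iff:
  assumes "group G" "g \<in> carrier G" "aut_orbit G g = aut_orbit G g'"
  shows "\<exists>\<phi>\<in>iso G G. g' = \<phi> g"
  using orbit_self[of g' G] assms(3) unfolding aut_orbit_def by auto

lemma card_img_le:
  assumes "finite D" "\<And>x y. x \<in> D \<Longrightarrow> y \<in> D \<Longrightarrow> p x = p y \<Longrightarrow> q x = q y"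
  shows "card (q ` D) \<le> card (p ` D)"
proof -
  define r where "r = (\<lambda>z. q (SOME x. x \<in> D \<and> p x = z))"
  have "q ` D \<subseteq> r ` (p ` D)"
  proof
    fix w assume "w \<in> q ` D"
    then obtain x where x: "x \<in> D" "w = q x" by blast
    define y where "y = (SOME y. y \<in> D \<and> p y = p x)"
    have ex: "\<exists>y. y \<in> D \<and> p y = p x" using x(1) by blast
    have y: "y \<in> D \<and> p y = p x" unfolding y_def by (rule someI_ex[OF ex])
    have "q y = q x" using assms(2)[of y x] y x(1) by blast
    then have "r (p x) = w" unfolding r_def using x(2) y_def by simp
    then show "w \<in> r ` (p ` D)" using x(1) by blast
  qed
  moreover have "finite (r ` (p ` D))" using assms(1) by simp
  ultimately have "card (q ` D) \<le> card (r ` (p ` D))" by (rule card_mono[rotated])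
  also have "\<dots> \<le> card (p ` D)" by (rule card_image_le) (simp add: assms(1))
  finally show ?thesis .
qed


lemma char_decomp:
  assumes H: "group H" and K: "group K" and phi: "\<phi> \<in> iso (H \<times>\<times> K) (H \<times>\<times> K)"
    and c1: "characteristic {(h, \<one>\<^bsub>K\<^esub>) | h. h \<in> carrier H} (H \<times>\<times> K)"
    and c2: "characteristic {(\<one>\<^bsub>H\<^esub>, k) | k. k \<in> carrier K} (H \<times>\<times> K)"
  shows "\<exists>\<psi>\<in>iso H H. \<exists>\<chi>\<in>iso K K. \<forall>x\<in>carrier H. \<forall>y\<in>carrier K. \<phi> (x, y) = (\<psi> x, \<chi> y)"
proof -
  interpret H: group H by (rule H)
  interpret K: group K by (rule K)
  define \<psi> where "\<psi> x = fst (\<phi> (x, \<one>\<^bsub>K\<^esub>))" for x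
  define \<chi> where "\<chi> y = snd (\<phi> (\<one>\<^bsub>H\<^esub>, y))" for y
  have hom: "\<phi> \<in> hom (H \<times>\<times> K) (H \<times>\<times> K)" and bij: "bij_betw \<phi> (carrier H \<times> carrier K) (carrier H \<times> carrier K)"
    using phi by (auto simp: iso_def)
  have p1: "\<phi> (x, \<one>\<^bsub>K\<^esub>) = (\<psi> x, \<one>\<^bsub>K\<^esub>)" "\<psi> x \<in> carrier H" if "x \<in> carrier H" for x
  proof -
    have "\<phi> (x, \<one>\<^bsub>K\<^esub>) \<in> {(h, \<one>\<^bsub>K\<^esub>) | h. h \<in> carrier H}"
      using c1 phi that unfolding characteristic_def by blast
    then show "\<phi> (x, \<one>\<^bsub>K\<^esub>) = (\<psi> x, \<one>\<^bsub>K\<^esub>)" "\<psi> x \<in> carrier H" unfolding \<psi>_def by auto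
  qed
  have p2: "\<phi> (\<one>\<^bsub>H\<^esub>, y) = (\<one>\<^bsub>H\<^esub>, \<chi> y)" "\<chi> y \<in> carrier K" if "y \<in> carrier K" for y
  proof -
    have "\<phi> (\<one>\<^bsub>H\<^esub>, y) \<in> {(\<one>\<^bsub>H\<^esub>, k) | k. k \<in> carrier K}"
      using c2 phi that unfolding characteristic_def by blast
    then show "\<phi> (\<one>\<^bsub>H\<^esub>, y) = (\<one>\<^bsub>H\<^esub>, \<chi> y)" "\<chi> y \<in> carrier K" unfolding \<chi>_def by auto
  qed
  have dec: "\<phi> (x, y) = (\<psi> x, \<chi> y)" if "x \<in> carrier H" "y \<in> carrier K" for x y
  proof -
    have "\<phi> (x, y) = \<phi> ((x, \<one>\<^bsub>K\<^esub>) \<otimes>\<^bsub>H \<times>\<times> K\<^esub> (\<one>\<^bsub>H\<^esub>, y))"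
      using that by simp
    also have "\<dots> = \<phi> (x, \<one>\<^bsub>K\<^esub>) \<otimes>\<^bsub>H \<times>\<times> K\<^esub> \<phi> (\<one>\<^bsub>H\<^esub>, y)"
      by (rule hom_mult[OF hom]) (use that in auto)
    finally show ?thesis using p1 p2 that by simp
  qed
  have inj: "inj_on \<phi> (carrier H \<times> carrier K)" using bij by (simp add: bij_betw_def)
  have img: "\<phi> ` (carrier H \<times> carrier K) = carrier H \<times> carrier K" using bij by (simp add: bij_betw_def)
  have "\<psi> \<in> iso H H"
  proof -
    have "\<psi> \<in> hom H H"
    proof (rule homI)
      fix x assume "x \<in> carrier H" then show "\<psi> x \<in> carrier H" using p1 by blast
    next
      fix x y assume xy: "x \<in> carrier H" "y \<in> carrier H"
      have "\<phi> (x \<otimes>\<^bsub>H\<^esub> y, \<one>\<^bsub>K\<^esub>) = \<phi> ((x, \<one>\<^bsub>K\<^esub>) \<otimes>\<^bsub>H \<times>\<times> K\<^esub> (y, \<one>\<^bsub>K\<^esub>))"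
        using K by (simp add: group.is_monoid monoid.l_one)
      also have "\<dots> = \<phi> (x, \<one>\<^bsub>K\<^esub>) \<otimes>\<^bsub>H \<times>\<times> K\<^esub> \<phi> (y, \<one>\<^bsub>K\<^esub>)"
        by (rule hom_mult[OF hom]) (use xy in auto)
      finally show "\<psi> (x \<otimes>\<^bsub>H\<^esub> y) = \<psi> x \<otimes>\<^bsub>H\<^esub> \<psi> y" using p1 xy by simp
    qed
    moreover have "inj_on \<psi> (carrier H)"
    proof (rule inj_onI)
      fix x y assume xy: "x \<in> carrier H" "y \<in> carrier H" "\<psi> x = \<psi> y"
      then have "\<phi> (x, \<one>\<^bsub>K\<^esub>) = \<phi> (y, \<one>\<^bsub>K\<^esub>)" using p1 by simp
      then show "x = y" using inj_onD[OF inj, of "(x, \<one>\<^bsub>K\<^esub>)" "(y, \<one>\<^bsub>K\<^esub>)"] xy by simp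
    qed
    moreover have "\<psi> ` carrier H = carrier H"
    proof
      show "\<psi> ` carrier H \<subseteq> carrier H" using p1 by blast
      show "carrier H \<subseteq> \<psi> ` carrier H"
      proof
        fix a assume a: "a \<in> carrier H"
        then have "(a, \<one>\<^bsub>K\<^esub>) \<in> \<phi> ` (carrier H \<times> carrier K)" using img K
          by (simp add: group.is_monoid monoid.one_closed)
        then obtain z1 z2 where "z1 \<in> carrier H" "z2 \<in> carrier K" "(a, \<one>\<^bsub>K\<^esub>) = \<phi> (z1, z2)" by auto
        then show "a \<in> \<psi> ` carrier H" using dec by auto
      qed
    qed
    ultimately show ?thesis by (simp add: iso_def bij_betw_def)
  qed
  moreover have "\<chi> \<in> iso K K"
  proof -
    have "\<chi> \<in> hom K K"
    proof (rule homI)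
      fix x assume "x \<in> carrier K" then show "\<chi> x \<in> carrier K" using p2 by blast
    next
      fix x y assume xy: "x \<in> carrier K" "y \<in> carrier K"
      have "\<phi> (\<one>\<^bsub>H\<^esub>, x \<otimes>\<^bsub>K\<^esub> y) = \<phi> ((\<one>\<^bsub>H\<^esub>, x) \<otimes>\<^bsub>H \<times>\<times> K\<^esub> (\<one>\<^bsub>H\<^esub>, y))"
        using H by (simp add: group.is_monoid monoid.l_one)
      also have "\<dots> = \<phi> (\<one>\<^bsub>H\<^esub>, x) \<otimes>\<^bsub>H \<times>\<times> K\<^esub> \<phi> (\<one>\<^bsub>H\<^esub>, y)"
        by (rule hom_mult[OF hom]) (use xy in auto)
      finally show "\<chi> (x \<otimes>\<^bsub>K\<^esub> y) = \<chi> x \<otimes>\<^bsub>K\<^esub> \<chi> y" using p2 xy by simp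
    qed
    moreover have "inj_on \<chi> (carrier K)"
    proof (rule inj_onI)
      fix x y assume xy: "x \<in> carrier K" "y \<in> carrier K" "\<chi> x = \<chi> y"
      then have "\<phi> (\<one>\<^bsub>H\<^esub>, x) = \<phi> (\<one>\<^bsub>H\<^esub>, y)" using p2 by simp
      then show "x = y" using inj_onD[OF inj, of "(\<one>\<^bsub>H\<^esub>, x)" "(\<one>\<^bsub>H\<^esub>, y)"] xy by simp
    qed
    moreover have "\<chi> ` carrier K = carrier K"
    proof
      show "\<chi> ` carrier K \<subseteq> carrier K" using p2 by blast
      show "carrier K \<subseteq> \<chi> ` carrier K"
      proof
        fix a assume a: "a \<in> carrier K"
        then have "(\<one>\<^bsub>H\<^esub>, a) \<in> \<phi> ` (carrier H \<times> carrier K)" using img H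
          by (simp add: group.is_monoid monoid.one_closed)
        then obtain z1 z2 where "z1 \<in> carrier H" "z2 \<in> carrier K" "(\<one>\<^bsub>H\<^esub>, a) = \<phi> (z1, z2)" by auto
        then show "a \<in> \<chi> ` carrier K" using dec by auto
      qed
    qed
    ultimately show ?thesis by (simp add: iso_def bij_betw_def)
  qed
  ultimately show ?thesis using dec by blast
qed


lemma le_cmul: "(c::nat) \<noteq> 0 \<Longrightarrow> a \<le> c * a + c"
  by (cases c) auto

theorem mainTheorem15:
  fixes H :: "('a, 'c) monoid_scheme" and K :: "('b, 'd) monoid_scheme"
    and SH :: "'a set" and SK :: "'b set" and SG :: "('a \<times> 'b) set"
  assumes "group H" and "group K"
    and "fin_gen_set H SH" and "fin_gen_set K SK"
    and "fin_gen_set (DirProd H K) SG"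
  shows "aut_growth (DirProd H K) SG \<preccurlyeq>\<^sub>g (\<lambda>n. aut_growth H SH n * aut_growth K SK n)
    \<and> (characteristic {(h, \<one>\<^bsub>K\<^esub>) | h. h \<in> carrier H} (DirProd H K) \<and>
         characteristic {(\<one>\<^bsub>H\<^esub>, k) | k. k \<in> carrier K} (DirProd H K) \<longrightarrow>
         aut_growth (DirProd H K) SG \<sim>\<^sub>g (\<lambda>n. aut_growth H SH n * aut_growth K SK n))"
proof -
  note HG = assms(1) and KG = assms(2) and SHg = assms(3) and SKg = assms(4) and SGg = assms(5)
  interpret H: group H by (rule HG)
  interpret K: group K by (rule KG)
  let ?G = "H \<times>\<times> K"
  have GG: "group ?G" using DirProd_group[OF HG KG] .
  let ?aH = "aut_growth H SH" and ?aK = "aut_growth K SK" and ?aG = "aut_growth ?G SG"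
  define DH where "DH n = {g \<in> carrier H. word_length H SH g \<le> n}" for n
  define DK where "DK n = {g \<in> carrier K. word_length K SK g \<le> n}" for n
  define DG where "DG n = {g \<in> carrier ?G. word_length ?G SG g \<le> n}" for n
  have finH: "finite (DH n)" for n unfolding DH_def using ball_finite[OF HG SHg] .
  have finK: "finite (DK n)" for n unfolding DK_def using ball_finite[OF KG SKg] .
  have finG: "finite (DG n)" for n unfolding DG_def using ball_finite[OF GG SGg] .
  have aH: "?aH n = card (aut_orbit H ` DH n)" for n unfolding DH_def by (rule aut_growth_img)
  have aK: "?aK n = card (aut_orbit K ` DK n)" for n unfolding DK_def by (rule aut_growth_img)
  have aG: "?aG n = card (aut_orbit ?G ` DG n)" for n unfolding DG_def by (rule aut_growth_img)
  have SGc: "SG \<subseteq> carrier ?G" using SGg unfolding fin_gen_set_def by blast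
  have SHc: "SH \<subseteq> carrier H" using SHg unfolding fin_gen_set_def by blast
  have SKc: "SK \<subseteq> carrier K" using SKg unfolding fin_gen_set_def by blast

  have part1: "?aG \<preccurlyeq>\<^sub>g (\<lambda>n. ?aH n * ?aK n)"
  proof -
    define L where "L = SG \<union> m_inv ?G ` SG"
    have Lfin: "finite L" using SGg unfolding L_def fin_gen_set_def by blast
    define c where "c = 1 + Max (insert 0 ((\<lambda>x. word_length H SH (fst x) + word_length K SK (snd x)) ` L))"
    have cb: "word_length H SH (fst x) \<le> c" "word_length K SK (snd x) \<le> c" if "x \<in> L" for x
    proof -
      have "word_length H SH (fst x) + word_length K SK (snd x)
         \<le> Max (insert 0 ((\<lambda>x. word_length H SH (fst x) + word_length K SK (snd x)) ` L))"
        using Lfin that by (intro Max_ge) auto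
      then show "word_length H SH (fst x) \<le> c" "word_length K SK (snd x) \<le> c" unfolding c_def by auto
    qed
    have c0: "c \<noteq> 0" unfolding c_def by simp
    have fh: "fst \<in> hom ?G H" unfolding hom_def by auto
    have sh: "snd \<in> hom ?G K" unfolding hom_def by auto
    have bnd: "word_length H SH (fst g) \<le> c * n \<and> word_length K SK (snd g) \<le> c * n" if "g \<in> DG n" for g n
    proof -
      have g: "g \<in> carrier ?G" "word_length ?G SG g \<le> n" using that unfolding DG_def by auto
      have w: "g \<in> words_eval ?G SG (word_length ?G SG g)" using in_words_wl[OF GG SGg g(1)] .
      have "word_length H SH (fst g) \<le> c * word_length ?G SG g"
        using wl_hom[OF fh GG HG SHg SGc _ w, of c] cb unfolding L_def by blast
      moreover have "word_length K SK (snd g) \<le> c * word_length ?G SG g"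
        using wl_hom[OF sh GG KG SKg SGc _ w, of c] cb unfolding L_def by blast
      moreover have "c * word_length ?G SG g \<le> c * n" using g(2) by simp
      ultimately show ?thesis by linarith
    qed
    show ?thesis unfolding growth_le_def
    proof (intro exI[of _ c] conjI allI c0)
      fix n
      define p where "p g = (aut_orbit H (fst g), aut_orbit K (snd g))" for g :: "'a \<times> 'b"
      have "?aG n = card (aut_orbit ?G ` DG n)" by (rule aG)
      also have "\<dots> \<le> card (p ` DG n)"
      proof (rule card_img_le[OF finG])
        fix x y assume xy: "x \<in> DG n" "y \<in> DG n" "p x = p y"
        then have xc: "x \<in> carrier ?G" "y \<in> carrier ?G" unfolding DG_def by auto
        obtain \<psi> where \<psi>: "\<psi> \<in> iso H H" "fst y = \<psi> (fst x)"
          using orbit_eq_iff[OF HG _, of "fst x" "fst y"] xy xc unfolding p_def by auto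
        obtain \<chi> where \<chi>: "\<chi> \<in> iso K K" "snd y = \<chi> (snd x)"
          using orbit_eq_iff[OF KG _, of "snd x" "snd y"] xy xc unfolding p_def by auto
        have Phi: "(\<lambda>(a, b). (\<psi> a, \<chi> b)) \<in> iso ?G ?G" using iso_paired2[OF HG KG] \<psi> \<chi> by blast
        have "y = (\<lambda>(a, b). (\<psi> a, \<chi> b)) x" using \<psi> \<chi> by (cases x, cases y) auto
        then show "aut_orbit ?G x = aut_orbit ?G y" using orbit_eq[OF GG Phi xc(1)] by simp
      qed
      also have "\<dots> \<le> card ((aut_orbit H ` DH (c * n)) \<times> (aut_orbit K ` DK (c * n)))"
      proof (rule card_mono)
        show "finite ((aut_orbit H ` DH (c * n)) \<times> (aut_orbit K ` DK (c * n)))"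
          using finH finK by simp
        show "p ` DG n \<subseteq> (aut_orbit H ` DH (c * n)) \<times> (aut_orbit K ` DK (c * n))"
        proof
          fix z assume "z \<in> p ` DG n"
          then obtain g where g: "g \<in> DG n" "z = p g" by blast
          then have "fst g \<in> DH (c * n)" "snd g \<in> DK (c * n)"
            using bnd[OF g(1)] unfolding DG_def DH_def DK_def by auto
          then show "z \<in> (aut_orbit H ` DH (c * n)) \<times> (aut_orbit K ` DK (c * n))"
            using g unfolding p_def by auto
        qed
      qed
      also have "\<dots> = ?aH (c * n) * ?aK (c * n)" by (simp add: aH aK card_cartesian_product)
      also have "\<dots> \<le> ?aH (c * n + c) * ?aK (c * n + c)"
        by (intro mult_mono aut_growth_mono[OF HG SHg] aut_growth_mono[OF KG SKg]) auto
      also have "\<dots> \<le> c * (?aH (c * n + c) * ?aK (c * n + c)) + c" by (rule le_cmul[OF c0])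
      finally show "?aG n \<le> c * (?aH (c * n + c) * ?aK (c * n + c)) + c" .
    qed
  qed

  have part2: "(\<lambda>n. ?aH n * ?aK n) \<preccurlyeq>\<^sub>g ?aG"
    if ch1: "characteristic {(h, \<one>\<^bsub>K\<^esub>) | h. h \<in> carrier H} ?G"
      and ch2: "characteristic {(\<one>\<^bsub>H\<^esub>, k) | k. k \<in> carrier K} ?G"
  proof -
    define LH where "LH = SH \<union> m_inv H ` SH"
    define LK where "LK = SK \<union> m_inv K ` SK"
    have LHfin: "finite LH" using SHg unfolding LH_def fin_gen_set_def by blast
    have LKfin: "finite LK" using SKg unfolding LK_def fin_gen_set_def by blast
    define cH where "cH = Max (insert 0 ((\<lambda>x. word_length ?G SG (x, \<one>\<^bsub>K\<^esub>)) ` LH))"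
    define cK where "cK = Max (insert 0 ((\<lambda>x. word_length ?G SG (\<one>\<^bsub>H\<^esub>, x)) ` LK))"
    have cHb: "word_length ?G SG (x, \<one>\<^bsub>K\<^esub>) \<le> cH" if "x \<in> LH" for x
      unfolding cH_def using LHfin that by (intro Max_ge) auto
    have cKb: "word_length ?G SG (\<one>\<^bsub>H\<^esub>, x) \<le> cK" if "x \<in> LK" for x
      unfolding cK_def using LKfin that by (intro Max_ge) auto
    define c where "c = cH + cK + 1"
    have c0: "c \<noteq> 0" unfolding c_def by simp
    have ih: "(\<lambda>x. (x, \<one>\<^bsub>K\<^esub>)) \<in> hom H ?G" unfolding hom_def by auto
    have ik: "(\<lambda>x. (\<one>\<^bsub>H\<^esub>, x)) \<in> hom K ?G" unfolding hom_def by auto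
    have bH: "word_length ?G SG (h, \<one>\<^bsub>K\<^esub>) \<le> cH * n" if "h \<in> DH n" for h n
    proof -
      have h: "h \<in> carrier H" "word_length H SH h \<le> n" using that unfolding DH_def by auto
      have "word_length ?G SG (h, \<one>\<^bsub>K\<^esub>) \<le> cH * word_length H SH h"
        using wl_hom[OF ih HG GG SGg SHc _ in_words_wl[OF HG SHg h(1)], of cH] cHb
        unfolding LH_def by blast
      also have "\<dots> \<le> cH * n" using h(2) by simp
      finally show ?thesis .
    qed
    have bK: "word_length ?G SG (\<one>\<^bsub>H\<^esub>, k) \<le> cK * n" if "k \<in> DK n" for k n
    proof -
      have k: "k \<in> carrier K" "word_length K SK k \<le> n" using that unfolding DK_def by auto
      have "word_length ?G SG (\<one>\<^bsub>H\<^esub>, k) \<le> cK * word_length K SK k"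
        using wl_hom[OF ik KG GG SGg SKc _ in_words_wl[OF KG SKg k(1)], of cK] cKb
        unfolding LK_def by blast
      also have "\<dots> \<le> cK * n" using k(2) by simp
      finally show ?thesis .
    qed
    show ?thesis unfolding growth_le_def
    proof (intro exI[of _ c] conjI allI c0)
      fix n
      define q where "q = (\<lambda>(h, k). (aut_orbit H h, aut_orbit K k))"
      define D where "D = DH n \<times> DK n"
      have "?aH n * ?aK n = card ((aut_orbit H ` DH n) \<times> (aut_orbit K ` DK n))"
        by (simp add: aH aK card_cartesian_product)
      also have "\<dots> = card (q ` D)" unfolding q_def D_def by (simp add: image_paired_Times)
      also have "\<dots> \<le> card (aut_orbit ?G ` D)"
      proof (rule card_img_le)
        show "finite D" unfolding D_def using finH finK by simp
        fix x y assume xy: "x \<in> D" "y \<in> D" "aut_orbit ?G x = aut_orbit ?G y"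
        obtain h k h' k' where e: "x = (h, k)" "y = (h', k')" by (cases x, cases y) auto
        have c: "h \<in> carrier H" "k \<in> carrier K" "h' \<in> carrier H" "k' \<in> carrier K"
          using xy(1,2) e unfolding D_def DH_def DK_def by auto
        obtain \<phi> where \<phi>: "\<phi> \<in> iso ?G ?G" "y = \<phi> x"
          using orbit_eq_iff[OF GG _ xy(3)] xy(1) c e by auto
        obtain \<psi> \<chi> where \<psi>\<chi>: "\<psi> \<in> iso H H" "\<chi> \<in> iso K K"
          "\<And>a b. a \<in> carrier H \<Longrightarrow> b \<in> carrier K \<Longrightarrow> \<phi> (a, b) = (\<psi> a, \<chi> b)"
          using char_decomp[OF HG KG \<phi>(1) ch1 ch2] by blast
        have "h' = \<psi> h" "k' = \<chi> k" using \<phi>(2) \<psi>\<chi>(3)[OF c(1,2)] e by auto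
        then show "q x = q y" unfolding q_def using e orbit_eq[OF HG \<psi>\<chi>(1) c(1)] orbit_eq[OF KG \<psi>\<chi>(2) c(2)]
          by simp
      qed
      also have "\<dots> \<le> card (aut_orbit ?G ` DG (c * n + c))"
      proof (rule card_mono)
        show "finite (aut_orbit ?G ` DG (c * n + c))" using finG by simp
        show "aut_orbit ?G ` D \<subseteq> aut_orbit ?G ` DG (c * n + c)"
        proof (rule image_mono, rule subsetI)
          fix x assume "x \<in> D"
          then obtain h k where e: "x = (h, k)" "h \<in> DH n" "k \<in> DK n" unfolding D_def by auto
          have c: "h \<in> carrier H" "k \<in> carrier K" using e unfolding DH_def DK_def by auto
          have "(h, k) = (h, \<one>\<^bsub>K\<^esub>) \<otimes>\<^bsub>?G\<^esub> (\<one>\<^bsub>H\<^esub>, k)" using c by simp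
          then have "word_length ?G SG (h, k) \<le> word_length ?G SG (h, \<one>\<^bsub>K\<^esub>) + word_length ?G SG (\<one>\<^bsub>H\<^esub>, k)"
            using wl_mult[OF GG SGg, of "(h, \<one>\<^bsub>K\<^esub>)" "(\<one>\<^bsub>H\<^esub>, k)"] c by simp
          also have "\<dots> \<le> cH * n + cK * n" using bH[OF e(2)] bK[OF e(3)] by simp
          also have "\<dots> \<le> c * n + c" unfolding c_def by (simp add: algebra_simps)
          finally show "x \<in> DG (c * n + c)" using e c unfolding DG_def by simp
        qed
      qed
      also have "\<dots> = ?aG (c * n + c)" by (simp add: aG)
      also have "\<dots> \<le> c * ?aG (c * n + c) + c" by (rule le_cmul[OF c0])
      finally show "?aH n * ?aK n \<le> c * ?aG (c * n + c) + c" .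
    qed
  qed
  show ?thesis using part1 part2 unfolding growth_equiv_def by blast
qed

end
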